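(* Let $f:\subseteq X\rightrightarrows Y$ be a problem between represented spaces. Then (1) if $X$ is multi-retraceable, then $\overline{f}\le_{sW}\mathsf{T}f$; (2) if $Y$ is multi-retraceable, then $\mathsf{T}f\le_{sW}\overline{f}$.
   Context: Represented space $(X,\delta_X)$: set with surjective partial $\delta_X:\subseteq\mathbb{N}^\mathbb{N}\to X$. A problem $f:\subseteq X\rightrightarrows Y$ is a partial multi-valued map with nonempty values on its domain; $F:\subseteq\mathbb{N}^\mathbb{N}\to\mathbb{N}^\mathbb{N}$ realizes $f$ ($F\vdash f$) if $\delta_YF(p)\in f(\delta_X(p))$ whenever $\delta_X(p)\in\mathrm{dom}(f)$. With $\langle p,q\rangle(2n)=p(n)$, $\langle p,q\rangle(2n+1)=q(n)$: $f\le_W g$ iff there are computable partial $H,K$ with $H\langle\mathrm{id},GK\rangle\vdash f$ for all $G\vdash g$; $f\le_{sW}g$ iff there are computable $H,K$ with $HGK\vdash f$ for all $G\vdash g$; $\equiv_W,\equiv_{sW}$, $<_W$ are the induced equivalences and strict orders. For $p\in\mathbb{N}^\mathbb{N}$, $p-1$ is the concatenation of $p(0)-1,p(1)-1,\dots$ with $0-1$ the empty word. The completion of $(X,\delta_X)$ is $\overline X=X\cup\{\bot\}$ with $\delta_{\overline X}(p)=\delta_X(p-1)$ if $p-1$ is an infinite sequence in $\mathrm{dom}(\delta_X)$, $\delta_{\overline X}(p)=\bot$ otherwise. The completion of $f$ is $\overline f:\overline X\rightrightarrows\overline Y$, $\overline f(x)=f(x)$ for $x\in\mathrm{dom}(f)$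 and $\overline f(x)=\overline Y$ otherwise. The totalization is $\mathsf{T}f:X\rightrightarrows Y$, $\mathsf{T}f(x)=f(x)$ for $x\in\mathrm{dom}(f)$ and $\mathsf{T}f(x)=Y$ otherwise. A space $X$ is multi-retraceable if there is a computable multi-valued $r:\overline X\rightrightarrows X$ with $r(x)=\{x\}$ for all $x\in X$. *)

theory Defs
  imports "HOL-Library.Nat_Bijection" "HOL-Library.Infinite_Set"
begin

type_synonym baire = "nat \<Rightarrow> nat"

text \<open>Total recursive functions (Kleene): n-ary functions, represented as functions on
  lists, only ever evaluated on argument lists of length n.\<close>
inductive total_recursive :: "nat \<Rightarrow> (nat list \<Rightarrow> nat) \<Rightarrow> bool" where
  zero: "total_recursive n (\<lambda>_. 0)"
| succ: "total_recursive 1 (\<lambda>xs. Suc (hd xs))"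
| proj: "i < n \<Longrightarrow> total_recursive n (\<lambda>xs. xs ! i)"
| comp: "total_recursive m g \<Longrightarrow> length fs = m \<Longrightarrow> (\<forall>f\<in>set fs. total_recursive n f)
         \<Longrightarrow> total_recursive n (\<lambda>xs. g (map (\<lambda>f. f xs) fs))"
| prim: "total_recursive n g \<Longrightarrow> total_recursive (Suc (Suc n)) h
         \<Longrightarrow> total_recursive (Suc n)
               (\<lambda>xs. rec_nat (g (tl xs)) (\<lambda>k acc. h (k # acc # tl xs)) (hd xs))"
| mu: "total_recursive (Suc n) g \<Longrightarrow> (\<forall>xs. length xs = n \<longrightarrow> (\<exists>y. g (y # xs) = 0))
       \<Longrightarrow> total_recursive n (\<lambda>xs. LEAST y. g (y # xs) = 0)"

definition computable_word :: "(nat list \<Rightarrow> nat list) \<Rightarrow> bool" where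
  "computable_word h \<longleftrightarrow>
     (\<exists>g. total_recursive 1 g \<and> (\<forall>w. list_encode (h w) = g [list_encode w]))"

definition init :: "baire \<Rightarrow> nat \<Rightarrow> nat list" where
  "init p m = map p [0..<m]"

text \<open>A partial map on Baire space is computable iff on its domain it is the limit of a
  computable word function applied to the finite prefixes of the input
  (equivalently: it is a restriction of a function computed by a Type-2 machine).\<close>
definition computable :: "(baire \<Rightarrow> baire option) \<Rightarrow> bool" where
  "computable F \<longleftrightarrow> (\<exists>h. computable_word h \<and>
     (\<forall>p q. F p = Some q \<longrightarrow>
        (\<forall>m. h (init p m) = init q (length (h (init p m)))) \<and>
        (\<forall>n. \<exists>m. n \<le> length (h (init p m)))))"

text \<open>A represented space is given by its partial surjective representation
  \<open>\<delta> :: baire \<Rightarrow> 'a option\<close>; the underlying set is the range of \<open>\<delta>\<close>.\<close>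
definition space :: "(baire \<Rightarrow> 'a option) \<Rightarrow> 'a set" where
  "space \<delta> = {x. \<exists>p. \<delta> p = Some x}"

text \<open>A problem \<open>f :\<subseteq> X \<rightrightarrows> Y\<close> is a domain \<open>D\<close> and a value map \<open>f\<close>.\<close>
definition problem :: "(baire \<Rightarrow> 'a option) \<Rightarrow> (baire \<Rightarrow> 'b option) \<Rightarrow> 'a set \<Rightarrow> ('a \<Rightarrow> 'b set) \<Rightarrow> bool" where
  "problem \<delta>X \<delta>Y D f \<longleftrightarrow> D \<subseteq> space \<delta>X \<and> (\<forall>x\<in>D. f x \<noteq> {} \<and> f x \<subseteq> space \<delta>Y)"

definition realizes :: "(baire \<Rightarrow> 'a option) \<Rightarrow> (baire \<Rightarrow> 'b option) \<Rightarrow> 'a set \<Rightarrow> ('a \<Rightarrow> 'b set)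
                        \<Rightarrow> (baire \<Rightarrow> baire option) \<Rightarrow> bool" where
  "realizes \<delta>X \<delta>Y D f F \<longleftrightarrow>
     (\<forall>p x. \<delta>X p = Some x \<and> x \<in> D \<longrightarrow>
        (\<exists>q y. F p = Some q \<and> \<delta>Y q = Some y \<and> y \<in> f x))"

definition sW_le ::
  "(baire \<Rightarrow> 'a option) \<Rightarrow> (baire \<Rightarrow> 'b option) \<Rightarrow> 'a set \<Rightarrow> ('a \<Rightarrow> 'b set) \<Rightarrow>
   (baire \<Rightarrow> 'c option) \<Rightarrow> (baire \<Rightarrow> 'd option) \<Rightarrow> 'c set \<Rightarrow> ('c \<Rightarrow> 'd set) \<Rightarrow> bool" where
  "sW_le \<delta>X \<delta>Y D f \<delta>U \<delta>V E g \<longleftrightarrow>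
     (\<exists>H K. computable H \<and> computable K \<and>
        (\<forall>G. realizes \<delta>U \<delta>V E g G \<longrightarrow>
              realizes \<delta>X \<delta>Y D f (\<lambda>p. Option.bind (Option.bind (K p) G) H)))"

definition minus1 :: "baire \<Rightarrow> baire option" where
  "minus1 p = (if infinite {i. p i \<noteq> 0}
               then Some (\<lambda>n. p (enumerate {i. p i \<noteq> 0} n) - 1) else None)"

text \<open>Completion \<open>\<overline>X = X \<union> {\<bottom>}\<close>, realised on \<open>'a option\<close> with \<open>None = \<bottom>\<close>.\<close>
definition completion :: "(baire \<Rightarrow> 'a option) \<Rightarrow> baire \<Rightarrow> 'a option option" where
  "completion \<delta> p = Some (Option.bind (minus1 p) \<delta>)"

definition comp_dom :: "(baire \<Rightarrow> 'a option) \<Rightarrow> 'a option set" where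
  "comp_dom \<delta>X = space (completion \<delta>X)"

definition comp_prob :: "(baire \<Rightarrow> 'b option) \<Rightarrow> 'a set \<Rightarrow> ('a \<Rightarrow> 'b set) \<Rightarrow> 'a option \<Rightarrow> 'b option set" where
  "comp_prob \<delta>Y D f xo = (case xo of Some x \<Rightarrow> if x \<in> D then Some ` f x else space (completion \<delta>Y)
                                   | None \<Rightarrow> space (completion \<delta>Y))"

definition tot_prob :: "(baire \<Rightarrow> 'b option) \<Rightarrow> 'a set \<Rightarrow> ('a \<Rightarrow> 'b set) \<Rightarrow> 'a \<Rightarrow> 'b set" where
  "tot_prob \<delta>Y D f x = (if x \<in> D then f x else space \<delta>Y)"

definition multi_retraceable :: "(baire \<Rightarrow> 'a option) \<Rightarrow> bool" where
  "multi_retraceable \<delta>X \<longleftrightarrow>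
     (\<exists>r. problem (completion \<delta>X) \<delta>X (comp_dom \<delta>X) r \<and>
          (\<forall>x\<in>space \<delta>X. r (Some x) = {x}) \<and>
          (\<exists>F. computable F \<and> realizes (completion \<delta>X) \<delta>X (comp_dom \<delta>X) r F))"

end

theory Submission imports Defs begin

definition recf :: "nat \<Rightarrow> (nat list \<Rightarrow> nat) \<Rightarrow> bool" where
  "recf n g \<longleftrightarrow> (\<exists>g'. total_recursive n g' \<and> (\<forall>xs. length xs = n \<longrightarrow> g' xs = g xs))"

lemma recf_cong: "recf n g \<Longrightarrow> (\<And>xs. length xs = n \<Longrightarrow> g xs = g' xs) \<Longrightarrow> recf n g'"
  unfolding recf_def by auto

lemma recf_TR: "total_recursive n g \<Longrightarrow> recf n g"
  unfolding recf_def by blast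

lemma recf_zero: "recf n (\<lambda>_. 0)" by (rule recf_TR, rule total_recursive.zero)

lemma recf_proj: "i < n \<Longrightarrow> recf n (\<lambda>xs. xs ! i)" by (rule recf_TR, rule total_recursive.proj)

lemma recf_succ1: "recf 1 (\<lambda>xs. Suc (xs ! 0))"
  by (rule recf_cong[OF recf_TR[OF total_recursive.succ]]) (auto simp: length_Suc_conv)

lemma recf_comp_list:
  assumes "recf m g" "length fs = m" "\<forall>f\<in>set fs. recf n f"
  shows "recf n (\<lambda>xs. g (map (\<lambda>f. f xs) fs))"
proof -
  from assms(1) obtain g' where g': "total_recursive m g'" "\<forall>xs. length xs = m \<longrightarrow> g' xs = g xs"
    unfolding recf_def by blast
  have "\<exists>fs'. length fs' = length fs \<and> (\<forall>f\<in>set fs'. total_recursive n f) \<and>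
     (\<forall>xs. length xs = n \<longrightarrow> map (\<lambda>f. f xs) fs' = map (\<lambda>f. f xs) fs)"
    using assms(3)
  proof (induction fs)
    case Nil then show ?case by auto
  next
    case (Cons f fs)
    then obtain fs' where IH: "length fs' = length fs" "\<forall>f\<in>set fs'. total_recursive n f"
      "\<forall>xs. length xs = n \<longrightarrow> map (\<lambda>f. f xs) fs' = map (\<lambda>f. f xs) fs" by auto
    from Cons.prems obtain f' where "total_recursive n f'" "\<forall>xs. length xs = n \<longrightarrow> f' xs = f xs"
      unfolding recf_def by auto
    with IH show ?case by (intro exI[of _ "f' # fs'"]) auto
  qed
  then obtain fs' where fs': "length fs' = length fs" "\<forall>f\<in>set fs'. total_recursive n f"
      "\<forall>xs. length xs = n \<longrightarrow> map (\<lambda>f. f xs) fs' = map (\<lambda>f. f xs) fs" by blast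
  have "total_recursive n (\<lambda>xs. g' (map (\<lambda>f. f xs) fs'))"
    by (rule total_recursive.comp[OF g'(1)]) (use fs' assms(2) in auto)
  then show ?thesis unfolding recf_def
    using fs' g' assms(2) by (intro exI[of _ "(\<lambda>xs. g' (map (\<lambda>f. f xs) fs'))"]) auto
qed

lemma recf_prim:
  assumes "recf n g" "recf (Suc (Suc n)) h"
  shows "recf (Suc n) (\<lambda>xs. rec_nat (g (tl xs)) (\<lambda>k acc. h (k # acc # tl xs)) (hd xs))"
proof -
  from assms obtain g' h' where g': "total_recursive n g'" "\<forall>xs. length xs = n \<longrightarrow> g' xs = g xs"
    and h': "total_recursive (Suc (Suc n)) h'" "\<forall>xs. length xs = Suc (Suc n) \<longrightarrow> h' xs = h xs"
    unfolding recf_def by blast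
  have e: "rec_nat (g' (tl xs)) (\<lambda>k acc. h' (k # acc # tl xs)) m =
        rec_nat (g (tl xs)) (\<lambda>k acc. h (k # acc # tl xs)) m" if "length xs = Suc n" for xs m
    using that g'(2) h'(2) by (induction m) auto
  show ?thesis unfolding recf_def
    using e total_recursive.prim[OF g'(1) h'(1)] by blast
qed

lemma recf_mu:
  assumes "recf (Suc n) g" "\<And>xs. length xs = n \<Longrightarrow> \<exists>y. g (y # xs) = 0"
  shows "recf n (\<lambda>xs. LEAST y. g (y # xs) = 0)"
proof -
  from assms obtain g' where g': "total_recursive (Suc n) g'" "\<forall>xs. length xs = Suc n \<longrightarrow> g' xs = g xs"
    unfolding recf_def by blast
  have "total_recursive n (\<lambda>xs. LEAST y. g' (y # xs) = 0)"
    by (rule total_recursive.mu[OF g'(1)]) (use assms(2) g'(2) in force)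
  then show ?thesis unfolding recf_def using g'(2) by (intro exI) auto
qed

lemma recf_prim1:
  assumes "recf 1 g" "recf 3 h"
  shows "recf 2 (\<lambda>xs. rec_nat (g (tl xs)) (\<lambda>k acc. h (k # acc # tl xs)) (hd xs))"
  using recf_prim[of 1 g h] assms by (simp only: numeral_2_eq_2 numeral_3_eq_3 One_nat_def)

lemma recf_prim2:
  assumes "recf 2 g" "recf 4 h"
  shows "recf 3 (\<lambda>xs. rec_nat (g (tl xs)) (\<lambda>k acc. h (k # acc # tl xs)) (hd xs))"
  proof -
  have e: "(4::nat) = Suc (Suc 2)" "(3::nat) = Suc 2" by simp_all
  show ?thesis using recf_prim[of 2 g h] assms unfolding e .
qed

lemma recf_comp1:
  assumes "recf 1 (\<lambda>ys. F (ys ! 0))" "recf n a"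
  shows "recf n (\<lambda>xs. F (a xs))"
  using recf_comp_list[OF assms(1), of "[a]" n] assms(2) by simp

lemma recf_comp2:
  assumes "recf 2 (\<lambda>ys. F (ys ! 0) (ys ! 1))" "recf n a" "recf n b"
  shows "recf n (\<lambda>xs. F (a xs) (b xs))"
  using recf_comp_list[OF assms(1), of "[a, b]" n] assms(2,3) by simp

lemma recf_comp3:
  assumes "recf 3 (\<lambda>ys. F (ys ! 0) (ys ! 1) (ys ! 2))" "recf n a" "recf n b" "recf n c"
  shows "recf n (\<lambda>xs. F (a xs) (b xs) (c xs))"
  using recf_comp_list[OF assms(1), of "[a, b, c]" n] assms(2-4) by simp

lemma recf_Suc: "recf n a \<Longrightarrow> recf n (\<lambda>xs. Suc (a xs))"
  by (rule recf_comp1[OF recf_succ1])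

lemma recf_const: "recf n (\<lambda>_. c)"
  by (induction c) (auto intro: recf_zero recf_Suc)

lemma recf_add2: "recf 2 (\<lambda>ys. ys ! 0 + ys ! 1)"
proof -
  have "recf 2 (\<lambda>xs. rec_nat ((\<lambda>ys. ys ! 0) (tl xs)) (\<lambda>k acc. (\<lambda>zs. Suc (zs ! 1)) (k # acc # tl xs)) (hd xs))"
    by (rule recf_prim1) (auto intro!: recf_proj recf_Suc)
  then show ?thesis
  proof (rule recf_cong)
    fix xs :: "nat list" assume "length xs = 2"
    then obtain a b where xs: "xs = [a, b]" by (cases xs; cases "tl xs"; auto simp: numeral_2_eq_2)
    have "rec_nat b (\<lambda>k acc. Suc acc) a = a + b" by (induction a) auto
    then show "rec_nat ((\<lambda>ys. ys ! 0) (tl xs)) (\<lambda>k acc. (\<lambda>zs. Suc (zs ! 1)) (k # acc # tl xs)) (hd xs) = xs ! 0 + xs ! 1"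
      using xs by simp
  qed
qed


lemma len2: "length xs = 2 \<Longrightarrow> xs = [xs ! 0, xs ! 1]"
  by (cases xs; cases "tl xs"; auto simp: numeral_2_eq_2)
lemma len3: "length xs = 3 \<Longrightarrow> xs = [xs ! 0, xs ! 1, xs ! 2]"
  by (cases xs; cases "tl xs"; cases "tl (tl xs)"; auto simp: numeral_3_eq_3)
lemma len1: "length xs = 1 \<Longrightarrow> xs = [xs ! 0]"
  by (cases xs; auto)

lemma recf_prim0':
  assumes "recf 0 (\<lambda>_. c)" "recf 2 (\<lambda>zs. H (zs ! 0) (zs ! 1))"
  shows "recf 1 (\<lambda>ys. rec_nat c (\<lambda>k acc. H k acc) (ys ! 0))"
proof -
  have h2: "recf (Suc (Suc 0)) (\<lambda>zs. H (zs ! 0) (zs ! 1))" using assms(2) by (simp only: numeral_2_eq_2)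
  have "recf (Suc 0) (\<lambda>ys. rec_nat c (\<lambda>k acc. H k acc) (ys ! 0))"
    apply (rule recf_cong[OF recf_prim[OF assms(1) h2]])
    apply (auto simp: length_Suc_conv)
    done
  then show ?thesis by (simp only: One_nat_def)
qed

lemma recf_prim1':
  assumes "recf 1 (\<lambda>zs. G (zs ! 0))" "recf 3 (\<lambda>zs. H (zs ! 0) (zs ! 1) (zs ! 2))"
  shows "recf 2 (\<lambda>ys. rec_nat (G (ys ! 1)) (\<lambda>k acc. H k acc (ys ! 1)) (ys ! 0))"
  apply (rule recf_cong[OF recf_prim1[OF assms]])
  apply (auto simp: length_Suc_conv numeral_2_eq_2)
  done

lemma recf_prim2':
  assumes "recf 2 (\<lambda>zs. G (zs ! 0) (zs ! 1))" "recf 4 (\<lambda>zs. H (zs ! 0) (zs ! 1) (zs ! 2) (zs ! 3))"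
  shows "recf 3 (\<lambda>ys. rec_nat (G (ys ! 1) (ys ! 2)) (\<lambda>k acc. H k acc (ys ! 1) (ys ! 2)) (ys ! 0))"
  apply (rule recf_cong[OF recf_prim2[OF assms]])
  apply (auto simp: length_Suc_conv numeral_3_eq_3)
  done

lemma recf_add: "recf n a \<Longrightarrow> recf n b \<Longrightarrow> recf n (\<lambda>xs. a xs + b xs)"
  by (rule recf_comp2[OF recf_add2])

lemma recf_mult2: "recf 2 (\<lambda>ys. ys ! 0 * ys ! 1)"
proof -
  have "recf 2 (\<lambda>ys. rec_nat ((\<lambda>z. 0) (ys ! 1)) (\<lambda>k acc. (\<lambda>k acc y. acc + y) k acc (ys ! 1)) (ys ! 0))"
    by (rule recf_prim1') (auto intro!: recf_add recf_proj recf_const)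
  moreover have "rec_nat 0 (\<lambda>k acc. acc + y) x = x * y" for x y :: nat by (induction x) auto
  ultimately show ?thesis by (simp only:)
qed

lemma recf_mult: "recf n a \<Longrightarrow> recf n b \<Longrightarrow> recf n (\<lambda>xs. a xs * b xs)"
  by (rule recf_comp2[OF recf_mult2])

lemma recf_pred1: "recf 1 (\<lambda>ys. ys ! 0 - 1)"
proof -
  have "recf 1 (\<lambda>ys. rec_nat 0 (\<lambda>k acc. k) (ys ! 0))"
    by (rule recf_prim0') (auto intro!: recf_proj recf_const)
  moreover have "rec_nat 0 (\<lambda>k acc. k) x = x - 1" for x :: nat by (cases x) auto
  ultimately show ?thesis by (simp only:)
qed

lemma recf_sub2: "recf 2 (\<lambda>ys. ys ! 0 - ys ! 1)"
proof -
  have "recf 2 (\<lambda>ys. rec_nat ((\<lambda>z. z) (ys ! 1)) (\<lambda>k acc. (\<lambda>k acc y. acc - 1) k acc (ys ! 1)) (ys ! 0))"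
    by (rule recf_prim1', rule recf_proj, simp, rule recf_comp1[OF recf_pred1], rule recf_proj, simp)
  moreover have "rec_nat y (\<lambda>k acc. acc - 1) x = y - x" for x y :: nat by (induction x) auto
  ultimately have "recf 2 (\<lambda>ys. ys ! 1 - ys ! 0)" by (simp only:)
  from recf_comp2[OF this, of 2 "\<lambda>ys. ys ! 1" "\<lambda>ys. ys ! 0"] show ?thesis
    by (simp add: recf_proj)
qed

lemma recf_sub: "recf n a \<Longrightarrow> recf n b \<Longrightarrow> recf n (\<lambda>xs. a xs - b xs)"
  by (rule recf_comp2[OF recf_sub2])

lemma recf_if3: "recf 3 (\<lambda>ys. if ys ! 0 = 0 then ys ! 1 else ys ! 2)"
proof -
  have "recf 3 (\<lambda>ys. rec_nat ((\<lambda>a b. a) (ys ! 1) (ys ! 2)) (\<lambda>k acc. (\<lambda>k acc a b. b) k acc (ys ! 1) (ys ! 2)) (ys ! 0))"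
    by (rule recf_prim2') (auto intro!: recf_proj)
  moreover have "rec_nat a (\<lambda>k acc. b) x = (if x = 0 then a else b)" for x a b :: nat by (cases x) auto
  ultimately show ?thesis by (simp only:)
qed

lemma recf_if: "recf n c \<Longrightarrow> recf n a \<Longrightarrow> recf n b \<Longrightarrow> recf n (\<lambda>xs. if c xs = 0 then a xs else b xs)"
  by (rule recf_comp3[OF recf_if3])

lemma recf_triangle1: "recf 1 (\<lambda>ys. triangle (ys ! 0))"
proof -
  have "recf 1 (\<lambda>ys. rec_nat 0 (\<lambda>k acc. acc + Suc k) (ys ! 0))"
    by (rule recf_prim0') (auto intro!: recf_add recf_Suc recf_proj recf_const)
  moreover have "rec_nat 0 (\<lambda>k acc. acc + Suc k) x = triangle x" for x :: nat by (induction x) auto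
  ultimately show ?thesis by (simp only:)
qed

lemma recf_triangle: "recf n a \<Longrightarrow> recf n (\<lambda>xs. triangle (a xs))"
  by (rule recf_comp1[OF recf_triangle1])

lemma recf_iter2:
  assumes "recf 1 (\<lambda>ys. s (ys ! 0))"
  shows "recf 2 (\<lambda>ys. (s ^^ (ys ! 0)) (ys ! 1))"
proof -
  have "recf 2 (\<lambda>ys. rec_nat ((\<lambda>z. z) (ys ! 1)) (\<lambda>k acc. (\<lambda>k acc y. s acc) k acc (ys ! 1)) (ys ! 0))"
    by (rule recf_prim1') (auto intro!: recf_comp1[OF assms] recf_proj)
  moreover have "rec_nat y (\<lambda>k acc. s acc) x = (s ^^ x) y" for x y :: nat by (induction x) auto
  ultimately show ?thesis by (simp only:)
qed

lemma recf_iter: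
  assumes "recf 1 (\<lambda>ys. s (ys ! 0))" "recf n a" "recf n b"
  shows "recf n (\<lambda>xs. (s ^^ a xs) (b xs))"
  by (rule recf_comp2[OF recf_iter2[OF assms(1)] assms(2,3)])


lemma recf_mu1:
  assumes "recf 2 (\<lambda>ys. G (ys ! 0) (ys ! 1))" "\<And>x. \<exists>y. G y x = 0"
  shows "recf 1 (\<lambda>xs. LEAST y. G y (xs ! 0) = 0)"
proof -
  have h: "recf (Suc 0) (\<lambda>xs. LEAST y. (\<lambda>ys. G (ys ! 0) (ys ! 1)) (y # xs) = 0)"
    by (rule recf_mu) (use assms in \<open>simp_all add: numeral_2_eq_2\<close>)
  show ?thesis unfolding One_nat_def by (rule recf_cong[OF h]) simp
qed

lemma recf_pe2: "recf 2 (\<lambda>ys. prod_encode (ys ! 0, ys ! 1))"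
  unfolding prod_encode_def by (simp add: recf_add recf_triangle recf_proj)

lemma recf_pe: "recf n a \<Longrightarrow> recf n b \<Longrightarrow> recf n (\<lambda>xs. prod_encode (a xs, b xs))"
  by (rule recf_comp2[OF recf_pe2])

definition sdec :: "nat \<Rightarrow> nat" where "sdec c = (LEAST s. Suc c - triangle (Suc s) = 0)"
definition d1 :: "nat \<Rightarrow> nat" where "d1 c = c - triangle (sdec c)"
definition d2 :: "nat \<Rightarrow> nat" where "d2 c = sdec c - d1 c"

lemma triangle_mono: "m \<le> n \<Longrightarrow> triangle m \<le> triangle n"
  by (induction n) (auto simp: le_Suc_eq)

lemma triangle_ge: "n \<le> triangle n"
  by (induction n) auto

lemma recf_sdec1: "recf 1 (\<lambda>xs. sdec (xs ! 0))"
  unfolding sdec_def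
proof (rule recf_mu1)
  show "recf 2 (\<lambda>ys. Suc (ys ! 1) - triangle (Suc (ys ! 0)))"
    by (simp add: recf_sub recf_Suc recf_triangle recf_proj del: triangle_Suc)
  fix x show "\<exists>y. Suc x - triangle (Suc y) = 0"
    using triangle_ge[of "Suc x"] by (intro exI[of _ x]) simp
qed

lemma recf_d1_1: "recf 1 (\<lambda>xs. d1 (xs ! 0))"
  unfolding d1_def by (intro recf_sub recf_triangle recf_comp1[OF recf_sdec1] recf_proj) simp_all

lemma recf_d1: "recf n a \<Longrightarrow> recf n (\<lambda>xs. d1 (a xs))"
  by (rule recf_comp1[OF recf_d1_1])

lemma recf_d2_1: "recf 1 (\<lambda>xs. d2 (xs ! 0))"
  unfolding d2_def by (intro recf_sub recf_d1 recf_comp1[OF recf_sdec1] recf_proj) simp_all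

lemma recf_d2: "recf n a \<Longrightarrow> recf n (\<lambda>xs. d2 (a xs))"
  by (rule recf_comp1[OF recf_d2_1])

lemma sdec_pe: "sdec (prod_encode (a, b)) = a + b"
proof -
  have pe: "prod_encode (a, b) = triangle (a + b) + a" by (simp add: prod_encode_def)
  show ?thesis unfolding sdec_def pe
  proof (rule Least_equality)
    show "Suc (triangle (a + b) + a) - triangle (Suc (a + b)) = 0" by simp
    fix y assume "Suc (triangle (a + b) + a) - triangle (Suc y) = 0"
    then have le: "Suc (triangle (a + b) + a) \<le> triangle (Suc y)" by simp
    show "a + b \<le> y"
    proof (rule ccontr)
      assume "\<not> a + b \<le> y"
      then have "Suc y \<le> a + b" by simp
      then have "triangle (Suc y) \<le> triangle (a + b)" by (rule triangle_mono)
      with le show False by simp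
    qed
  qed
qed

lemma d1_pe[simp]: "d1 (prod_encode (a, b)) = a"
  unfolding d1_def sdec_pe by (simp add: prod_encode_def)

lemma d2_pe[simp]: "d2 (prod_encode (a, b)) = b"
  by (simp add: d2_def sdec_pe)

definition step :: "(nat \<Rightarrow> nat) \<Rightarrow> nat \<Rightarrow> nat" where
  "step \<phi> s = (if d1 s = 0 then s else prod_encode (d2 (d1 s - 1), Suc (prod_encode (\<phi> (d1 (d1 s - 1)), d2 s))))"

definition revmap :: "(nat \<Rightarrow> nat) \<Rightarrow> nat \<Rightarrow> nat" where
  "revmap \<phi> c = d2 ((step \<phi> ^^ c) (prod_encode (c, 0)))"

lemma recf_step:
  assumes ph: "recf 1 (\<lambda>ys. \<phi> (ys ! 0))" shows "recf 1 (\<lambda>ys. step \<phi> (ys ! 0))"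
  unfolding step_def
  by (intro recf_if recf_d1 recf_d2 recf_pe recf_sub recf_Suc recf_const recf_proj recf_comp1[OF ph]) simp_all

lemma recf_revmap:
  assumes ph: "recf 1 (\<lambda>ys. \<phi> (ys ! 0))" shows "recf 1 (\<lambda>ys. revmap \<phi> (ys ! 0))"
  unfolding revmap_def
  by (intro recf_d2 recf_iter[OF recf_step[OF ph]] recf_pe recf_proj recf_const) simp_all

lemma list_encode_Cons: "list_encode (x # xs) = Suc (prod_encode (x, list_encode xs))"
  by simp

lemma length_le_encode: "length w \<le> list_encode w"
  by (induction w) (auto intro: le_trans[OF _ le_prod_encode_2])

lemma step_fix: "(step \<phi> ^^ k) (prod_encode (0, a)) = prod_encode (0, a)"
  by (induction k) (auto simp: step_def)

lemma step_run: "length w \<le> k \<Longrightarrow>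
  (step \<phi> ^^ k) (prod_encode (list_encode w, list_encode u)) = prod_encode (0, list_encode (rev (map \<phi> w) @ u))"
proof (induction w arbitrary: k u)
  case Nil then show ?case by (simp add: step_fix)
next
  case (Cons x w)
  then obtain k' where k: "k = Suc k'" "length w \<le> k'" by (cases k) auto
  have "step \<phi> (prod_encode (list_encode (x # w), list_encode u)) = prod_encode (list_encode w, list_encode (\<phi> x # u))"
    by (simp add: step_def)
  then show ?case using Cons.IH[OF k(2), of "\<phi> x # u"] unfolding k(1) funpow_Suc_right o_def
    by simp
qed

lemma revmap_correct: "revmap \<phi> (list_encode w) = list_encode (rev (map \<phi> w))"
  unfolding revmap_def using step_run[OF length_le_encode, of w \<phi> "[]"] by simp

lemma computable_word_mapSuc: "computable_word (map Suc)"
proof -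
  have "recf 1 (\<lambda>ys. revmap id (revmap Suc (ys ! 0)))"
    by (intro recf_comp1[OF recf_revmap] recf_proj recf_Suc) (simp_all add: recf_proj)
  then obtain g where g: "total_recursive 1 g" "\<forall>xs. length xs = 1 \<longrightarrow> g xs = revmap id (revmap Suc (xs ! 0))"
    unfolding recf_def by blast
  show ?thesis unfolding computable_word_def
    using g by (intro exI[of _ g]) (simp add: revmap_correct)
qed


lemma computable_suc: "computable (\<lambda>p. Some (\<lambda>n. Suc (p n)))"
  unfolding computable_def
  apply (rule exI[of _ "map Suc"])
  apply (auto simp: computable_word_mapSuc init_def)
  done

lemma enumerate_UNIV_nat: "enumerate (UNIV :: nat set) n = n"
proof (induction n)
  case 0 then show ?case by (simp add: enumerate_0)
next
  case (Suc n)
  then show ?case by (simp add: enumerate_Suc'' Least_equality)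
qed

lemma minus1_suc: "minus1 (\<lambda>n. Suc (q n)) = Some q"
  unfolding minus1_def by (simp add: enumerate_UNIV_nat)

lemma completion_suc: "completion \<delta> (\<lambda>n. Suc (q n)) = Some (\<delta> q)"
  unfolding completion_def by (simp add: minus1_suc)

lemma in_space: "\<delta> p = Some x \<Longrightarrow> x \<in> space \<delta>"
  unfolding space_def by blast

theorem lemma4p6:
  fixes \<delta>X :: "baire \<Rightarrow> 'a option" and \<delta>Y :: "baire \<Rightarrow> 'b option"
    and D :: "'a set" and f :: "'a \<Rightarrow> 'b set"
  assumes "problem \<delta>X \<delta>Y D f"
  shows "(multi_retraceable \<delta>X \<longrightarrow>
            sW_le (completion \<delta>X) (completion \<delta>Y) (comp_dom \<delta>X) (comp_prob \<delta>Y D f)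
                  \<delta>X \<delta>Y (space \<delta>X) (tot_prob \<delta>Y D f))
       \<and> (multi_retraceable \<delta>Y \<longrightarrow>
            sW_le \<delta>X \<delta>Y (space \<delta>X) (tot_prob \<delta>Y D f)
                  (completion \<delta>X) (completion \<delta>Y) (comp_dom \<delta>X) (comp_prob \<delta>Y D f))"
proof (intro conjI impI)
  have DX: "D \<subseteq> space \<delta>X" and fY: "\<And>x. x \<in> D \<Longrightarrow> f x \<subseteq> space \<delta>Y"
    using assms unfolding problem_def by auto
  define S where "S = (\<lambda>p::baire. Some (\<lambda>n. Suc (p n)))"
  have cS: "computable S" unfolding S_def by (rule computable_suc)
  {
    assume "multi_retraceable \<delta>X"
    then obtain r F where r: "\<forall>x\<in>space \<delta>X. r (Some x) = {x}"
      and cF: "computable F" and F: "realizes (completion \<delta>X) \<delta>X (comp_dom \<delta>X) r F"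
      unfolding multi_retraceable_def by blast
    show "sW_le (completion \<delta>X) (completion \<delta>Y) (comp_dom \<delta>X) (comp_prob \<delta>Y D f)
                  \<delta>X \<delta>Y (space \<delta>X) (tot_prob \<delta>Y D f)"
    proof -
    have "\<forall>G. realizes \<delta>X \<delta>Y (space \<delta>X) (tot_prob \<delta>Y D f) G \<longrightarrow> realizes (completion \<delta>X) (completion \<delta>Y) (comp_dom \<delta>X) (comp_prob \<delta>Y D f)
              (\<lambda>p. Option.bind (Option.bind (F p) G) S)"
    proof (intro allI impI)
      fix G assume G: "realizes \<delta>X \<delta>Y (space \<delta>X) (tot_prob \<delta>Y D f) G"
      show "realizes (completion \<delta>X) (completion \<delta>Y) (comp_dom \<delta>X) (comp_prob \<delta>Y D f)
              (\<lambda>p. Option.bind (Option.bind (F p) G) S)"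
        unfolding realizes_def
      proof (intro allI impI)
        fix p xo assume a: "completion \<delta>X p = Some xo \<and> xo \<in> comp_dom \<delta>X"
        then obtain q y where q: "F p = Some q" "\<delta>X q = Some y" "y \<in> r xo"
          using F unfolding realizes_def by blast
        then obtain q' z where q': "G q = Some q'" "\<delta>Y q' = Some z" "z \<in> tot_prob \<delta>Y D f y"
          using G in_space[of \<delta>X q y] unfolding realizes_def by blast
        have cY: "completion \<delta>Y (\<lambda>n. Suc (q' n)) = Some (Some z)"
          using q'(2) by (simp add: completion_suc)
        have "Some z \<in> comp_prob \<delta>Y D f xo"
        proof (cases xo)
          case None then show ?thesis using cY by (simp add: comp_prob_def in_space)
        next
          case (Some x)
          show ?thesis
          proof (cases "x \<in> D")
            case True
            with DX r have "r xo = {x}" using Some by auto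
            with q(3) have "y = x" by simp
            with q'(3) True Some show ?thesis by (simp add: comp_prob_def tot_prob_def)
          next
            case False then show ?thesis using cY Some by (simp add: comp_prob_def in_space)
          qed
        qed
        then show "\<exists>q y. Option.bind (Option.bind (F p) G) S = Some q \<and> completion \<delta>Y q = Some y \<and> y \<in> comp_prob \<delta>Y D f xo"
          using q(1) q'(1) cY by (intro exI[of _ "\<lambda>n. Suc (q' n)"] exI[of _ "Some z"]) (simp add: S_def)
      qed
    qed
    then show ?thesis unfolding sW_le_def using cS cF by blast
    qed
  }
  {
    assume "multi_retraceable \<delta>Y"
    then obtain r R where r: "\<forall>y\<in>space \<delta>Y. r (Some y) = {y}"
      and cR: "computable R" and R: "realizes (completion \<delta>Y) \<delta>Y (comp_dom \<delta>Y) r R"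
      unfolding multi_retraceable_def by blast
    show "sW_le \<delta>X \<delta>Y (space \<delta>X) (tot_prob \<delta>Y D f)
                  (completion \<delta>X) (completion \<delta>Y) (comp_dom \<delta>X) (comp_prob \<delta>Y D f)"
    proof -
    have "\<forall>G. realizes (completion \<delta>X) (completion \<delta>Y) (comp_dom \<delta>X) (comp_prob \<delta>Y D f) G \<longrightarrow> realizes \<delta>X \<delta>Y (space \<delta>X) (tot_prob \<delta>Y D f)
              (\<lambda>p. Option.bind (Option.bind (S p) G) R)"
    proof (intro allI impI)
      fix G assume G: "realizes (completion \<delta>X) (completion \<delta>Y) (comp_dom \<delta>X) (comp_prob \<delta>Y D f) G"
      show "realizes \<delta>X \<delta>Y (space \<delta>X) (tot_prob \<delta>Y D f)
              (\<lambda>p. Option.bind (Option.bind (S p) G) R)"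
        unfolding realizes_def
      proof (intro allI impI)
        fix p x assume a: "\<delta>X p = Some x \<and> x \<in> space \<delta>X"
        have cX: "completion \<delta>X (\<lambda>n. Suc (p n)) = Some (Some x)"
          using a by (simp add: completion_suc)
        then have "Some x \<in> comp_dom \<delta>X" unfolding comp_dom_def by (rule in_space)
        with cX G obtain q yo where q: "G (\<lambda>n. Suc (p n)) = Some q" "completion \<delta>Y q = Some yo"
            "yo \<in> comp_prob \<delta>Y D f (Some x)"
          unfolding realizes_def by blast
        have "yo \<in> comp_dom \<delta>Y" unfolding comp_dom_def using q(2) by (rule in_space)
        with q(2) R obtain q'' y where q'': "R q = Some q''" "\<delta>Y q'' = Some y" "y \<in> r yo"
          unfolding realizes_def by blast
        have "y \<in> tot_prob \<delta>Y D f x"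
        proof (cases "x \<in> D")
          case True
          with q(3) obtain z where z: "yo = Some z" "z \<in> f x" by (auto simp: comp_prob_def)
          with fY[OF True] r have "r yo = {z}" by auto
          with q''(3) z True show ?thesis by (simp add: tot_prob_def)
        next
          case False then show ?thesis using q''(2) by (simp add: tot_prob_def in_space)
        qed
        then show "\<exists>q y. Option.bind (Option.bind (S p) G) R = Some q \<and> \<delta>Y q = Some y \<and> y \<in> tot_prob \<delta>Y D f x"
          using q(1) q''(1,2) by (simp add: S_def)
      qed
    qed
    then show ?thesis unfolding sW_le_def using cS cR by blast
    qed
  }
qed

end
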